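(* Assume the Standing setting below and let $x\in\Lambda$. Then: - if $\mu_+\lambda_+\eta^{-1}<1$, then $\omega(x)(v_t,v_s)=0$ for all $v_t\in T_x\Lambda$, $v_s\in E^s_x$; - if $\mu_-\lambda_-\eta<1$, then $\omega(x)(v_t,v_u)=0$ for all $v_t\in T_x\Lambda$, $v_u\in E^u_x$; - if $\lambda_+^2\eta^{-1}<1$, then $\omega(x)(v^1_s,v^2_s)=0$ for all $v^1_s,v^2_s\in E^s_x$; - if $\lambda_-^2\eta<1$, then $\omega(x)(v^1_u,v^2_u)=0$ for all $v^1_u,v^2_u\in E^u_x$.
   Context: Standing setting. A map, form or vector field is called $\mathcal C^r$ if it and its derivatives up to order $r$ are continuous and uniformly bounded; $r$ is a sufficiently large integer. $(M,\omega)$ is an orientable, connected, non-compact $d$-dimensional Riemannian manifold whose metric is $\mathcal C^r$ with uniformly bounded derivatives, and $\omega$ is a symplectic form (a closed non-degenerate 2-form). (U1): there is $\rho_0>0$ such that for every $x\in M$ the ball $B_{\rho_0}(x)$ carries a $\mathcal C^r$ coordinate chart onto the unit ball of $\mathbb R^d$, the charts and their inverses having uniformly bounded $\mathcal C^r$ norms. $f:M\to M$ is a diffeomorphism which is conformally symplectic: $f^*\omega=\eta\,\omega$ for a constant $\eta>0$. $\Lambda\subset M$ is an unbounded, boundaryless, connected, $f$-invariant submanifold which is a normally hyperbolic invariant manifold (NHIM): there is a $Df$-invariant splitting $T_xM=T_x\Lambda\oplus E^s_x\oplus E^u_x$ for $x\in\Lambda$, rates $0<\lambda_\pm<1$, $\mu_\pm\ge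 1$ with $\lambda_+\mu_-<1$, $\lambda_-\mu_+<1$, and constants $C_\pm,D_\pm>0$ such that for all $x\in\Lambda$: $v\in T_x\Lambda$ iff $\|Df^n(x)v\|\le D_+\mu_+^n\|v\|$ for all $n\ge 0$ and $\|Df^n(x)v\|\le D_-\mu_-^{|n|}\|v\|$ for all $n\le 0$; $v\in E^s_x$ iff $\|Df^n(x)v\|\le C_+\lambda_+^n\|v\|$ for all $n\ge0$; $v\in E^u_x$ iff $\|Df^n(x)v\|\le C_-\lambda_-^{|n|}\|v\|$ for all $n\le 0$. (U2): for some $\rho>0$ there is a $\mathcal C^r$ diffeomorphism with $\mathcal C^r$ inverse from a uniform neighborhood of the zero section of $E^s\oplus E^u$ onto $\mathcal O_\rho=\{y\in M: d(y,\Lambda)<\rho\}$. (U3): $f\in\mathcal C^r(\mathcal O_\rho)$, $f^{-1}\in\mathcal C^r(f(\mathcal O_\rho))$. Under these assumptions $\Lambda$ has local stable and unstable manifolds $W^{s,\rm loc}_\Lambda$, $W^{u,\rm loc}_\Lambda$ (points near $\Lambda$ whose forward, resp. backward, orbits stay near $\Lambda$; tangent at $\Lambda$ to $T\Lambda\oplus E^s$, resp. $T\Lambda\oplus E^u$), which are disjoint unions $W^{s,\rm loc}_\Lambda=\bigcup_{x\in\Lambda}W^{s,\rm loc}_x$, $W^{u,\rm loc}_\Lambda=\bigcup_{x\in\Lambda}W^{u,\rm loc}_x$ of strong stable/unstable fibers: $W^{s,\rm loc}_x$ is the set of nearby $y$ with $d(f^n(y),f^n(x))\le C\lambda_+^n$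 for all $n\ge0$ (a manifold tangent to $E^s_x$ at $x$), and analogously $W^{u,\rm loc}_x$ with $n\le 0$ and $\lambda_-$. It is assumed: (H1) $\Lambda$ is $\mathcal C^1$; (H2) $W^{s,\rm loc}_\Lambda$, $W^{u,\rm loc}_\Lambda$ are $\mathcal C^1$; (H3) the fibers $W^{s,\rm loc}_x$, $W^{u,\rm loc}_x$ are $\mathcal C^1$ uniformly in $x$; (H4) the foliations of $W^{s,\rm loc}_\Lambda$, $W^{u,\rm loc}_\Lambda$ by these fibers are of class $\mathcal C^{1,1}$ (leaves uniformly $\mathcal C^1$, depending $\mathcal C^1$ on the base point in the $\mathcal C^1$ topology). The wave maps $\Omega_+:W^{s,\rm loc}_\Lambda\to\Lambda$, $\Omega_-:W^{u,\rm loc}_\Lambda\to\Lambda$ send $y$ to the unique $x\in\Lambda$ with $y\in W^{s,\rm loc}_x$ (resp. $y\in W^{u,\rm loc}_x$); they satisfy $\Omega_\pm\circ f^n=f^n\circ\Omega_\pm$, which extends them to the global manifolds $W^s_\Lambda=\bigcup_{n\ge0}f^{-n}(W^{s,\rm loc}_\Lambda)$, $W^u_\Lambda=\bigcup_{n\ge0}f^{n}(W^{u,\rm loc}_\Lambda)$ (with global fibers $W^s_x$, $W^u_x$ defined analogously). A homoclinic channel is a submanifold $\Gamma\subset W^s_\Lambda\cap W^u_\Lambda$ (contained in finitely many iterates of the local manifolds) such that for all $x\in\Gamma$: $T_xM=T_xW^s_\Lambda+T_xW^u_\Lambda$, $T_xW^s_\Lambda\cap T_xW^u_\Lambda=T_x\Gamma$,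 $T_x\Gamma\oplus T_xW^s_{\Omega_+(x)}=T_xW^s_\Lambda$, $T_x\Gamma\oplus T_xW^u_{\Omega_-(x)}=T_xW^u_\Lambda$, and $\Omega_-|_\Gamma$ is a $\mathcal C^1$ diffeomorphism onto its image. Writing $\Omega^\Gamma_\pm=\Omega_\pm|_\Gamma$ (both $\mathcal C^1$ diffeomorphisms onto their images $H_\pm\subset\Lambda$), the scattering map is $S=\Omega_+^\Gamma\circ(\Omega_-^\Gamma)^{-1}:H_-\to H_+$. (U4): $f\in\mathcal C^r(\mathcal O)$ and $f^{-1}\in\mathcal C^r(f(\mathcal O))$, where $\mathcal O$ is the union of $\mathcal O_\rho$ with uniform neighborhoods of $W^{s,\rm loc}_\Lambda$ and $W^{u,\rm loc}_\Lambda$ (including the finitely many iterates containing $\Gamma$). (U5): $\sup_{x\in\mathcal O}\|\omega(x)\|<\infty$. For a submanifold $N$, $\omega|_N$ denotes the restriction of $\omega$ to $TN\times TN$. *)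

theory Defs
  imports "HOL-Analysis.Analysis"
begin

text \<open>Model: the Riemannian manifold M is (Nash-)isometrically embedded in a Euclidean
space 'v; T x is the tangent space of M at x (a linear subspace of 'v), Df x the
derivative (tangent map) of f at x, and omega x the symplectic form at x.\<close>

fun dfpow :: "('v \<Rightarrow> 'v) \<Rightarrow> ('v \<Rightarrow> 'v \<Rightarrow> 'v) \<Rightarrow> nat \<Rightarrow> 'v \<Rightarrow> 'v \<Rightarrow> 'v" where
  "dfpow f Df 0 x = id"
| "dfpow f Df (Suc n) x = Df ((f ^^ n) x) \<circ> dfpow f Df n x"

text \<open>Backward tangent iterate: Df^(-n)(x) = (Df^n(f^(-n) x))^(-1) restricted to tangent spaces.\<close>
definition dfneg :: "'v set \<Rightarrow> ('v \<Rightarrow> 'v set) \<Rightarrow> ('v \<Rightarrow> 'v) \<Rightarrow> ('v \<Rightarrow> 'v \<Rightarrow> 'v)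
    \<Rightarrow> nat \<Rightarrow> 'v \<Rightarrow> 'v \<Rightarrow> 'v" where
  "dfneg M T f Df n x v =
     (THE w. w \<in> T ((inv_into M f ^^ n) x) \<and> dfpow f Df n ((inv_into M f ^^ n) x) w = v)"

definition is_NHIM_splitting ::
  "'v::real_normed_vector set \<Rightarrow> ('v \<Rightarrow> 'v set) \<Rightarrow> ('v \<Rightarrow> 'v) \<Rightarrow> ('v \<Rightarrow> 'v \<Rightarrow> 'v) \<Rightarrow> 'v set
   \<Rightarrow> ('v \<Rightarrow> 'v set) \<Rightarrow> ('v \<Rightarrow> 'v set) \<Rightarrow> ('v \<Rightarrow> 'v set)
   \<Rightarrow> real \<Rightarrow> real \<Rightarrow> real \<Rightarrow> real \<Rightarrow> real \<Rightarrow> real \<Rightarrow> real \<Rightarrow> real \<Rightarrow> bool" where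
  "is_NHIM_splitting M T f Df \<Lambda> TL Es Eu lp lm mp mm Cp Cm Dp Dm \<longleftrightarrow>
     \<Lambda> \<subseteq> M \<and> f ` \<Lambda> = \<Lambda> \<and>
     0 < lp \<and> lp < 1 \<and> 0 < lm \<and> lm < 1 \<and> 1 \<le> mp \<and> 1 \<le> mm \<and>
     lp * mm < 1 \<and> lm * mp < 1 \<and> 0 < Cp \<and> 0 < Cm \<and> 0 < Dp \<and> 0 < Dm \<and>
     (\<forall>x\<in>\<Lambda>.
        subspace (TL x) \<and> subspace (Es x) \<and> subspace (Eu x) \<and>
        TL x \<subseteq> T x \<and> Es x \<subseteq> T x \<and> Eu x \<subseteq> T x \<and>
        \<comment> \<open>direct sum T_x M = T_x Lambda + E^s_x + E^u_x\<close>
        (\<forall>v\<in>T x. \<exists>!(a, b, c). a \<in> TL x \<and> b \<in> Es x \<and> c \<in> Eu x \<and> v = a + b + c) \<and>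
        \<comment> \<open>Df-invariance\<close>
        Df x ` TL x = TL (f x) \<and> Df x ` Es x = Es (f x) \<and> Df x ` Eu x = Eu (f x) \<and>
        \<comment> \<open>rate characterisations\<close>
        (\<forall>v\<in>T x. v \<in> TL x \<longleftrightarrow>
            (\<forall>n. norm (dfpow f Df n x v) \<le> Dp * mp ^ n * norm v) \<and>
            (\<forall>n. norm (dfneg M T f Df n x v) \<le> Dm * mm ^ n * norm v)) \<and>
        (\<forall>v\<in>T x. v \<in> Es x \<longleftrightarrow> (\<forall>n. norm (dfpow f Df n x v) \<le> Cp * lp ^ n * norm v)) \<and>
        (\<forall>v\<in>T x. v \<in> Eu x \<longleftrightarrow> (\<forall>n. norm (dfneg M T f Df n x v) \<le> Cm * lm ^ n * norm v)))"

end

theory Submission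
  imports Defs
begin

lemma decay_zero:
  fixes c B r :: real
  assumes "\<And>n. c \<le> B * r ^ n" "0 \<le> r" "r < 1"
  shows "c \<le> 0"
proof -
  have "(\<lambda>n. B * r ^ n) \<longlonglongrightarrow> B * 0"
    by (intro tendsto_mult tendsto_const LIMSEQ_power_zero) (use assms in auto)
  then show ?thesis using assms(1)
    by (simp add: LIMSEQ_le_const)
qed

lemma decay_zero2:
  fixes c B q e :: real
  assumes "\<And>n. c * e ^ n \<le> B * q ^ n" "0 < e" "0 \<le> q" "q / e < 1"
  shows "c \<le> 0"
proof (rule decay_zero[of c B "q/e"])
  fix n
  have "c * e ^ n \<le> B * q ^ n" by fact
  then have "c \<le> B * q ^ n / e ^ n" using assms(2) by (simp add: field_simps)
  then show "c \<le> B * (q / e) ^ n" by (simp add: power_divide)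
qed (use assms in auto)

lemma mult4_mono:
  fixes K a a' b b' :: real
  assumes "0 \<le> K" "0 \<le> a" "a \<le> a'" "0 \<le> b" "b \<le> b'"
  shows "K * a * b \<le> K * a' * b'"
  using assms by (simp add: mult_mono mult_left_mono)

lemma nhim_unpack:
  assumes "is_NHIM_splitting M T f Df \<Lambda> TL Es Eu lp lm mp mm Cp Cm Dp Dm" "x \<in> \<Lambda>"
  shows "\<Lambda> \<subseteq> M" "f ` \<Lambda> = \<Lambda>" "0 < lp" "0 < lm" "1 \<le> mp" "1 \<le> mm" "0 < Cp" "0 < Cm" "0 < Dp" "0 < Dm"
    "TL x \<subseteq> T x" "Es x \<subseteq> T x" "Eu x \<subseteq> T x"
    "\<And>v n. v \<in> TL x \<Longrightarrow> norm (dfpow f Df n x v) \<le> Dp * mp ^ n * norm v"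
    "\<And>v n. v \<in> TL x \<Longrightarrow> norm (dfneg M T f Df n x v) \<le> Dm * mm ^ n * norm v"
    "\<And>v n. v \<in> Es x \<Longrightarrow> norm (dfpow f Df n x v) \<le> Cp * lp ^ n * norm v"
    "\<And>v n. v \<in> Eu x \<Longrightarrow> norm (dfneg M T f Df n x v) \<le> Cm * lm ^ n * norm v"
proof -
  note A = assms(1)[unfolded is_NHIM_splitting_def]
  note B = A[THEN conjunct2, THEN conjunct2, THEN conjunct2, THEN conjunct2, THEN conjunct2,
     THEN conjunct2, THEN conjunct2, THEN conjunct2, THEN conjunct2, THEN conjunct2,
     THEN conjunct2, THEN conjunct2, THEN conjunct2, THEN conjunct2, THEN bspec, OF assms(2)]
  show "\<Lambda> \<subseteq> M" using A by (elim conjE) assumption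
  show "f ` \<Lambda> = \<Lambda>" using A by (elim conjE) assumption
  show "0 < lp" using A by (elim conjE) assumption
  show "0 < lm" using A by (elim conjE) assumption
  show "1 \<le> mp" using A by (elim conjE) assumption
  show "1 \<le> mm" using A by (elim conjE) assumption
  show "0 < Cp" using A by (elim conjE) assumption
  show "0 < Cm" using A by (elim conjE) assumption
  show "0 < Dp" using A by (elim conjE) assumption
  show "0 < Dm" using A by (elim conjE) assumption
  show s1: "TL x \<subseteq> T x" using B by (elim conjE) assumption
  show s2: "Es x \<subseteq> T x" using B by (elim conjE) assumption
  show s3: "Eu x \<subseteq> T x" using B by (elim conjE) assumption
  have r1: "\<forall>v\<in>T x. v \<in> TL x \<longleftrightarrow>
            (\<forall>n. norm (dfpow f Df n x v) \<le> Dp * mp ^ n * norm v) \<and>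
            (\<forall>n. norm (dfneg M T f Df n x v) \<le> Dm * mm ^ n * norm v)" using B by (elim conjE) assumption
  have r2: "\<forall>v\<in>T x. v \<in> Es x \<longleftrightarrow> (\<forall>n. norm (dfpow f Df n x v) \<le> Cp * lp ^ n * norm v)"
    using B by (elim conjE) assumption
  have r3: "\<forall>v\<in>T x. v \<in> Eu x \<longleftrightarrow> (\<forall>n. norm (dfneg M T f Df n x v) \<le> Cm * lm ^ n * norm v)"
    using B by (elim conjE) assumption
  show "\<And>v n. v \<in> TL x \<Longrightarrow> norm (dfpow f Df n x v) \<le> Dp * mp ^ n * norm v"
    "\<And>v n. v \<in> TL x \<Longrightarrow> norm (dfneg M T f Df n x v) \<le> Dm * mm ^ n * norm v"
    using r1 s1 by (meson subsetD)+
  show "\<And>v n. v \<in> Es x \<Longrightarrow> norm (dfpow f Df n x v) \<le> Cp * lp ^ n * norm v"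
    using r2 s2 by (meson subsetD)
  show "\<And>v n. v \<in> Eu x \<Longrightarrow> norm (dfneg M T f Df n x v) \<le> Cm * lm ^ n * norm v"
    using r3 s3 by (meson subsetD)
qed

theorem lemma6p4:
  fixes M Onb \<Lambda> :: "'v::euclidean_space set"
    and T TL Es Eu :: "'v \<Rightarrow> 'v set"
    and f :: "'v \<Rightarrow> 'v" and Df :: "'v \<Rightarrow> 'v \<Rightarrow> 'v"
    and \<omega> :: "'v \<Rightarrow> 'v \<Rightarrow> 'v \<Rightarrow> real"
    and \<eta> lp lm mp mm Cp Cm Dp Dm :: real and d :: nat and x :: 'v
  assumes tangent: "\<forall>y\<in>M. subspace (T y) \<and> dim (T y) = d"
    and f_bij: "bij_betw f M M"
    and f_deriv: "\<forall>y\<in>M. (f has_derivative Df y) (at y within M)"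
    and Df_tangent: "\<forall>y\<in>M. linear (Df y) \<and> bij_betw (Df y) (T y) (T (f y))"
    and omega_bilinear: "\<forall>y\<in>M. bilinear (\<omega> y)"
    and omega_antisym: "\<forall>y\<in>M. \<forall>v\<in>T y. \<forall>w\<in>T y. \<omega> y v w = - \<omega> y w v"
    and omega_nondeg: "\<forall>y\<in>M. \<forall>v\<in>T y. (\<forall>w\<in>T y. \<omega> y v w = 0) \<longrightarrow> v = 0"
    and eta_pos: "\<eta> > 0"
    and conformal: "\<forall>y\<in>M. \<forall>v\<in>T y. \<forall>w\<in>T y. \<omega> (f y) (Df y v) (Df y w) = \<eta> * \<omega> y v w"
    and NHIM: "is_NHIM_splitting M T f Df \<Lambda> TL Es Eu lp lm mp mm Cp Cm Dp Dm"
    and O_nbhd: "\<Lambda> \<subseteq> Onb" "Onb \<subseteq> M"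
    and U5: "\<exists>K. \<forall>y\<in>Onb. \<forall>v\<in>T y. \<forall>w\<in>T y. \<bar>\<omega> y v w\<bar> \<le> K * norm v * norm w"
    and x_in: "x \<in> \<Lambda>"
  shows "(mp * lp / \<eta> < 1 \<longrightarrow> (\<forall>vt\<in>TL x. \<forall>vs\<in>Es x. \<omega> x vt vs = 0))
       \<and> (mm * lm * \<eta> < 1 \<longrightarrow> (\<forall>vt\<in>TL x. \<forall>vu\<in>Eu x. \<omega> x vt vu = 0))
       \<and> (lp\<^sup>2 / \<eta> < 1 \<longrightarrow> (\<forall>v1\<in>Es x. \<forall>v2\<in>Es x. \<omega> x v1 v2 = 0))
       \<and> (lm\<^sup>2 * \<eta> < 1 \<longrightarrow> (\<forall>v1\<in>Eu x. \<forall>v2\<in>Eu x. \<omega> x v1 v2 = 0))"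
proof -
  define g where "g = inv_into M f"
  note U = nhim_unpack[OF NHIM x_in]
  have LM: "\<Lambda> \<subseteq> M" and fL: "f ` \<Lambda> = \<Lambda>" using U(1,2) .
  have par: "0 < lp" "0 < lm" "1 \<le> mp" "1 \<le> mm" "0 < Cp" "0 < Cm" "0 < Dp" "0 < Dm"
    using U(3-10) .
  have spl: "TL x \<subseteq> T x" "Es x \<subseteq> T x" "Eu x \<subseteq> T x" using U(11-13) .
  have rTL: "\<And>v n. v \<in> TL x \<Longrightarrow> norm (dfpow f Df n x v) \<le> Dp * mp ^ n * norm v
       \<and> norm (dfneg M T f Df n x v) \<le> Dm * mm ^ n * norm v"
    using U(14,15) by blast
  have rEs: "\<And>v n. v \<in> Es x \<Longrightarrow> norm (dfpow f Df n x v) \<le> Cp * lp ^ n * norm v"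
    using U(16) by blast
  have rEu: "\<And>v n. v \<in> Eu x \<Longrightarrow> norm (dfneg M T f Df n x v) \<le> Cm * lm ^ n * norm v"
    using U(17) by blast
  obtain K0 where K0: "\<forall>y\<in>Onb. \<forall>v\<in>T y. \<forall>w\<in>T y. \<bar>\<omega> y v w\<bar> \<le> K0 * norm v * norm w"
    using U5 by blast
  define K where "K = max K0 0"
  have K0le: "K \<ge> 0" unfolding K_def by simp
  have Kb: "\<And>y v w. y \<in> \<Lambda> \<Longrightarrow> v \<in> T y \<Longrightarrow> w \<in> T y \<Longrightarrow> \<bar>\<omega> y v w\<bar> \<le> K * norm v * norm w"
  proof -
    fix y v w assume "y \<in> \<Lambda>" "v \<in> T y" "w \<in> T y"
    then have "\<bar>\<omega> y v w\<bar> \<le> K0 * norm v * norm w" using K0 O_nbhd by blast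
    also have "\<dots> \<le> K * norm v * norm w" unfolding K_def
      by (simp add: mult_right_mono)
    finally show "\<bar>\<omega> y v w\<bar> \<le> K * norm v * norm w" .
  qed
  have fnL: "\<And>n y. y \<in> \<Lambda> \<Longrightarrow> (f ^^ n) y \<in> \<Lambda>"
  proof -
    fix n y assume "y \<in> \<Lambda>" then show "(f ^^ n) y \<in> \<Lambda>"
    proof (induction n)
      case (Suc n)
      then have "(f ^^ n) y \<in> \<Lambda>" by simp
      then have "f ((f ^^ n) y) \<in> f ` \<Lambda>" by (rule imageI)
      then show ?case unfolding fL by simp
    qed simp
  qed
  have fnM: "\<And>n y. y \<in> M \<Longrightarrow> (f ^^ n) y \<in> M"
  proof -
    fix n y assume "y \<in> M" then show "(f ^^ n) y \<in> M"
    proof (induction n)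
      case (Suc n)
      then show ?case using bij_betw_apply[OF f_bij] by simp
    qed simp
  qed
  have dT: "\<And>n y. y \<in> M \<Longrightarrow> bij_betw (dfpow f Df n y) (T y) (T ((f ^^ n) y))"
  proof -
    fix n y assume y: "y \<in> M" show "bij_betw (dfpow f Df n y) (T y) (T ((f ^^ n) y))"
    proof (induction n)
      case 0 then show ?case by (simp add: bij_betw_id[unfolded id_def])
    next
      case (Suc n)
      have "bij_betw (Df ((f ^^ n) y)) (T ((f ^^ n) y)) (T (f ((f ^^ n) y)))"
        using Df_tangent fnM[OF y] by blast
      then have "bij_betw (Df ((f ^^ n) y) \<circ> dfpow f Df n y) (T y) (T (f ((f ^^ n) y)))"
        by (rule bij_betw_trans[OF Suc.IH])
      then show ?case by (simp add: comp_def)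
    qed
  qed
  have dW: "\<And>n y v w. y \<in> M \<Longrightarrow> v \<in> T y \<Longrightarrow> w \<in> T y \<Longrightarrow>
      \<omega> ((f ^^ n) y) (dfpow f Df n y v) (dfpow f Df n y w) = \<eta> ^ n * \<omega> y v w"
  proof -
    fix n y v w assume y: "y \<in> M" and v: "v \<in> T y" and w: "w \<in> T y"
    show "\<omega> ((f ^^ n) y) (dfpow f Df n y v) (dfpow f Df n y w) = \<eta> ^ n * \<omega> y v w"
    proof (induction n)
      case 0 then show ?case by simp
    next
      case (Suc n)
      have a: "dfpow f Df n y v \<in> T ((f ^^ n) y)" "dfpow f Df n y w \<in> T ((f ^^ n) y)"
        using bij_betw_apply[OF dT[OF y, of n] v] bij_betw_apply[OF dT[OF y, of n] w] by auto
      have "\<omega> ((f ^^ Suc n) y) (dfpow f Df (Suc n) y v) (dfpow f Df (Suc n) y w)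
          = \<eta> * \<omega> ((f ^^ n) y) (dfpow f Df n y v) (dfpow f Df n y w)"
        using conformal[rule_format, OF fnM[OF y, of n] a] by (simp only: funpow.simps dfpow.simps comp_apply)
      also have "\<dots> = \<eta> ^ Suc n * \<omega> y v w" using Suc.IH by simp
      finally show ?case .
    qed
  qed
  have gL: "\<And>n z. z \<in> \<Lambda> \<Longrightarrow> (g ^^ n) z \<in> \<Lambda> \<and> (f ^^ n) ((g ^^ n) z) = z"
  proof -
    have injf: "inj_on f M" using f_bij bij_betw_def by blast
    have g1: "\<And>z. z \<in> \<Lambda> \<Longrightarrow> g z \<in> \<Lambda> \<and> f (g z) = z"
    proof -
      fix z assume "z \<in> \<Lambda>"
      then obtain a where a: "a \<in> \<Lambda>" "z = f a" using fL by blast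
      then have "g z = a" unfolding g_def using injf LM by (simp add: inv_into_f_f subsetD)
      then show "g z \<in> \<Lambda> \<and> f (g z) = z" using a by simp
    qed
    fix n z assume z: "z \<in> \<Lambda>"
    show "(g ^^ n) z \<in> \<Lambda> \<and> (f ^^ n) ((g ^^ n) z) = z"
    proof (induction n)
      case 0 then show ?case using z by simp
    next
      case (Suc n)
      have "(f ^^ Suc n) ((g ^^ Suc n) z) = (f ^^ n) (f (g ((g ^^ n) z)))"
        by (simp add: funpow_swap1)
      then show ?case using Suc g1 by simp
    qed
  qed
  have dneg: "\<And>n v. v \<in> T x \<Longrightarrow> dfneg M T f Df n x v \<in> T ((g ^^ n) x)
       \<and> dfpow f Df n ((g ^^ n) x) (dfneg M T f Df n x v) = v"
  proof -
    fix n v assume v: "v \<in> T x"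
    define y where "y = (g ^^ n) x"
    have y: "y \<in> \<Lambda>" "(f ^^ n) y = x" using gL[OF x_in, of n] unfolding y_def by blast+
    have yM: "y \<in> M" using y(1) LM by blast
    have b: "bij_betw (dfpow f Df n y) (T y) (T x)" using dT[OF yM, of n] unfolding y(2) .
    have ex: "\<exists>!w. w \<in> T y \<and> dfpow f Df n y w = v"
    proof -
      have "v \<in> dfpow f Df n y ` T y" using b v unfolding bij_betw_def by blast
      then obtain w where w: "w \<in> T y" "dfpow f Df n y w = v" by blast
      have inj: "inj_on (dfpow f Df n y) (T y)" using b unfolding bij_betw_def by blast
      show ?thesis
      proof (rule ex1I[of _ w])
        show "w \<in> T y \<and> dfpow f Df n y w = v" using w by blast
        fix w' assume "w' \<in> T y \<and> dfpow f Df n y w' = v"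
        then show "w' = w" using inj w inj_onD[of "dfpow f Df n y" "T y" w' w] by auto
      qed
    qed
    have eq: "dfneg M T f Df n x v = (THE w. w \<in> T y \<and> dfpow f Df n y w = v)"
      unfolding dfneg_def y_def g_def by (rule refl)
    show "dfneg M T f Df n x v \<in> T ((g ^^ n) x)
       \<and> dfpow f Df n ((g ^^ n) x) (dfneg M T f Df n x v) = v"
      unfolding eq y_def[symmetric] by (rule theI'[OF ex])
  qed
  have fwd: "\<And>v w a b B1 B2. v \<in> T x \<Longrightarrow> w \<in> T x \<Longrightarrow> 0 < a \<Longrightarrow> 0 < b \<Longrightarrow> a * b / \<eta> < 1
     \<Longrightarrow> (\<And>n. norm (dfpow f Df n x v) \<le> B1 * a ^ n * norm v)
     \<Longrightarrow> (\<And>n. norm (dfpow f Df n x w) \<le> B2 * b ^ n * norm w) \<Longrightarrow> \<omega> x v w = 0"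
  proof -
    fix v w a b B1 B2 assume v: "v \<in> T x" and w: "w \<in> T x" and ab: "0 < a" "0 < b" "a * b / \<eta> < 1"
      and h1: "\<And>n. norm (dfpow f Df n x v) \<le> B1 * a ^ n * norm v"
      and h2: "\<And>n. norm (dfpow f Df n x w) \<le> B2 * b ^ n * norm w"
    have "\<bar>\<omega> x v w\<bar> \<le> 0"
    proof (rule decay_zero2[of _ \<eta> "K * (B1 * norm v) * (B2 * norm w)" "a * b"])
      fix n
      have xM: "x \<in> M" using x_in LM by blast
      have "\<bar>\<omega> x v w\<bar> * \<eta> ^ n = \<bar>\<omega> ((f ^^ n) x) (dfpow f Df n x v) (dfpow f Df n x w)\<bar>"
        using dW[OF xM v w, of n] eta_pos by (simp add: abs_mult)
      also have "\<dots> \<le> K * norm (dfpow f Df n x v) * norm (dfpow f Df n x w)"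
        using Kb[OF fnL[OF x_in] bij_betw_apply[OF dT[OF xM, of n] v] bij_betw_apply[OF dT[OF xM, of n] w]] .
      also have "\<dots> \<le> K * (B1 * a ^ n * norm v) * (B2 * b ^ n * norm w)"
        using mult4_mono[OF K0le norm_ge_zero h1 norm_ge_zero h2] .
      also have "\<dots> = K * (B1 * norm v) * (B2 * norm w) * (a * b) ^ n"
        by (simp add: power_mult_distrib)
      finally show "\<bar>\<omega> x v w\<bar> * \<eta> ^ n \<le> K * (B1 * norm v) * (B2 * norm w) * (a * b) ^ n" .
    qed (use ab eta_pos in auto)
    then show "\<omega> x v w = 0" by simp
  qed
  have bwd: "\<And>v w a b B1 B2. v \<in> T x \<Longrightarrow> w \<in> T x \<Longrightarrow> 0 < a \<Longrightarrow> 0 < b \<Longrightarrow> a * b * \<eta> < 1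
     \<Longrightarrow> (\<And>n. norm (dfneg M T f Df n x v) \<le> B1 * a ^ n * norm v)
     \<Longrightarrow> (\<And>n. norm (dfneg M T f Df n x w) \<le> B2 * b ^ n * norm w) \<Longrightarrow> \<omega> x v w = 0"
  proof -
    fix v w a b B1 B2 assume v: "v \<in> T x" and w: "w \<in> T x" and ab: "0 < a" "0 < b" "a * b * \<eta> < 1"
      and h1: "\<And>n. norm (dfneg M T f Df n x v) \<le> B1 * a ^ n * norm v"
      and h2: "\<And>n. norm (dfneg M T f Df n x w) \<le> B2 * b ^ n * norm w"
    have "\<bar>\<omega> x v w\<bar> \<le> 0"
    proof (rule decay_zero2[of _ 1 "K * (B1 * norm v) * (B2 * norm w)" "a * b * \<eta>"])
      fix n
      define y where "y = (g ^^ n) x"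
      define v' where "v' = dfneg M T f Df n x v"
      define w' where "w' = dfneg M T f Df n x w"
      have y: "y \<in> \<Lambda>" "(f ^^ n) y = x" using gL[OF x_in] y_def by auto
      have yM: "y \<in> M" using y LM by blast
      have v': "v' \<in> T y" "dfpow f Df n y v' = v" unfolding v'_def y_def using dneg[OF v, of n] by auto
      have w': "w' \<in> T y" "dfpow f Df n y w' = w" unfolding w'_def y_def using dneg[OF w, of n] by auto
      have "\<bar>\<omega> x v w\<bar> * 1 ^ n = \<eta> ^ n * \<bar>\<omega> y v' w'\<bar>"
        using dW[OF yM v'(1) w'(1), of n] y v' w' eta_pos by (simp add: abs_mult)
      also have "\<dots> \<le> \<eta> ^ n * (K * norm v' * norm w')"
        using Kb[OF y(1) v'(1) w'(1)] eta_pos by (simp add: mult_left_mono)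
      also have "\<dots> \<le> \<eta> ^ n * (K * (B1 * a ^ n * norm v) * (B2 * b ^ n * norm w))"
        using mult4_mono[OF K0le norm_ge_zero h1[of n, folded v'_def] norm_ge_zero h2[of n, folded w'_def]]
          eta_pos by (simp add: mult_left_mono)
      also have "\<dots> = K * (B1 * norm v) * (B2 * norm w) * (a * b * \<eta>) ^ n"
        by (simp add: power_mult_distrib)
      finally show "\<bar>\<omega> x v w\<bar> * 1 ^ n \<le> K * (B1 * norm v) * (B2 * norm w) * (a * b * \<eta>) ^ n" .
    qed (use ab eta_pos in auto)
    then show "\<omega> x v w = 0" by simp
  qed
  show ?thesis
  proof (intro conjI impI ballI)
    fix vt vs assume h: "mp * lp / \<eta> < 1" "vt \<in> TL x" "vs \<in> Es x"
    show "\<omega> x vt vs = 0"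
      by (rule fwd[of vt vs mp lp Dp Cp]) (use h spl rTL rEs par in auto)
  next
    fix vt vu assume h: "mm * lm * \<eta> < 1" "vt \<in> TL x" "vu \<in> Eu x"
    show "\<omega> x vt vu = 0"
      by (rule bwd[of vt vu mm lm Dm Cm]) (use h spl rTL rEu par in auto)
  next
    fix v1 v2 assume h: "lp\<^sup>2 / \<eta> < 1" "v1 \<in> Es x" "v2 \<in> Es x"
    show "\<omega> x v1 v2 = 0"
      by (rule fwd[of v1 v2 lp lp Cp Cp]) (use h spl rEs par in \<open>auto simp: power2_eq_square\<close>)
  next
    fix v1 v2 assume h: "lm\<^sup>2 * \<eta> < 1" "v1 \<in> Eu x" "v2 \<in> Eu x"
    show "\<omega> x v1 v2 = 0"
      by (rule bwd[of v1 v2 lm lm Cm Cm]) (use h spl rEu par in \<open>auto simp: power2_eq_square\<close>)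
  qed
qed

end
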